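(* Let $K$ be a positive semiring and let $R$ and $S$ be $K$-relations over finite sets of attributes $X$ and $Y$. The following are equivalent: (a) $R$ and $S$ are consistent; (b) $R[X\cap Y]\equiv S[X\cap Y]$; (c) the ordinary relations $R'$ and $S'$ are consistent (i.e., $R'[X\cap Y]=S'[X\cap Y]$, where $P[W]=\{t[W]:t\in P\}$) and $R\Join S\equiv S\Join R$; (d) $R\equiv (R\Join S)[X]$ and $S\equiv (R\Join S)[Y]$.
   Context: A commutative semiring $(K,+,\cdot,0,1)$ with $0\neq 1$ is positive if $a+b=0$ implies $a=b=0$, and $ab=0$ implies $a=0$ or $b=0$. Each attribute $A$ has a domain $\mathrm{Dom}(A)$. For a finite set of attributes $X$, $\mathrm{Tup}(X)$ is the set of maps assigning to each $A\in X$ an element of $\mathrm{Dom}(A)$; for $Y\subseteq X$, $t[Y]$ is the restriction of $t$ to $Y$; $XY$ denotes $X\cup Y$. A $K$-relation over $X$ is a map $R:\mathrm{Tup}(X)\to K$ with finite support $R'=\{t: R(t)\neq 0\}$. For $Y\subseteq X$, the marginal $R[Y]$ is the $K$-relation over $Y$ with $R[Y](u)=\sum_{r\in R',\, r[Y]=u} R(r)$. For $a\in K$, $aR$ is $t\mapsto aR(t)$. $R\equiv S$ (same attribute set) means $aR=bS$ for some nonzero $a,b\in K$. $K$-relations $R$ over $X$ and $S$ over $Y$ are consistent if there is a $K$-relation $T$ over $XY$ with $R\equiv T[X]$ and $S\equiv T[Y]$. For a $K$-relation $T$ over $Y$, $Z\subseteq Y$ and $u\in\mathrm{Tup}(Z)$,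 set $c_T(u)=\prod_{v\in T[Z]',\, v\neq u}T[Z](v)$ (empty product equals $1$). The join of $R$ over $X$ and $S$ over $Y$ is the $K$-relation over $XY$ defined by $(R\Join S)(t)=R(t[X])\,S(t[Y])\,c_S(t[X\cap Y])$, with $Z=X\cap Y$. *)

theory Defs
  imports Main
begin

text \<open>Positive commutative semiring (0 \<noteq> 1 is part of comm_semiring_1).\<close>
definition positive_semiring :: "'k::comm_semiring_1 itself \<Rightarrow> bool" where
  "positive_semiring _ \<longleftrightarrow>
     (\<forall>a b::'k. a + b = 0 \<longrightarrow> a = 0 \<and> b = 0) \<and>
     (\<forall>a b::'k. a * b = 0 \<longrightarrow> a = 0 \<or> b = 0)"

definition Tup :: "('a \<Rightarrow> 'v set) \<Rightarrow> 'a set \<Rightarrow> ('a \<rightharpoonup> 'v) set" where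
  "Tup Dom X = {t. dom t = X \<and> (\<forall>A\<in>X. \<exists>v\<in>Dom A. t A = Some v)}"

definition supp :: "(('a \<rightharpoonup> 'v) \<Rightarrow> 'k::zero) \<Rightarrow> ('a \<rightharpoonup> 'v) set" where
  "supp R = {t. R t \<noteq> 0}"

definition krel :: "('a \<Rightarrow> 'v set) \<Rightarrow> 'a set \<Rightarrow> (('a \<rightharpoonup> 'v) \<Rightarrow> 'k::zero) \<Rightarrow> bool" where
  "krel Dom X R \<longleftrightarrow> supp R \<subseteq> Tup Dom X \<and> finite (supp R)"

definition marg :: "(('a \<rightharpoonup> 'v) \<Rightarrow> 'k::comm_monoid_add) \<Rightarrow> 'a set \<Rightarrow> ('a \<rightharpoonup> 'v) \<Rightarrow> 'k" where
  "marg R Y u = (\<Sum>r\<in>{r\<in>supp R. r |` Y = u}. R r)"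

definition kequiv :: "(('a \<rightharpoonup> 'v) \<Rightarrow> 'k::comm_semiring_1) \<Rightarrow> (('a \<rightharpoonup> 'v) \<Rightarrow> 'k) \<Rightarrow> bool" where
  "kequiv R S \<longleftrightarrow> (\<exists>a b. a \<noteq> 0 \<and> b \<noteq> 0 \<and> (\<lambda>t. a * R t) = (\<lambda>t. b * S t))"

definition kconsistent :: "('a \<Rightarrow> 'v set) \<Rightarrow> 'a set \<Rightarrow> (('a \<rightharpoonup> 'v) \<Rightarrow> 'k::comm_semiring_1)
    \<Rightarrow> 'a set \<Rightarrow> (('a \<rightharpoonup> 'v) \<Rightarrow> 'k) \<Rightarrow> bool" where
  "kconsistent Dom X R Y S \<longleftrightarrow>
     (\<exists>T. krel Dom (X \<union> Y) T \<and> kequiv R (marg T X) \<and> kequiv S (marg T Y))"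

definition cfac :: "(('a \<rightharpoonup> 'v) \<Rightarrow> 'k::comm_semiring_1) \<Rightarrow> 'a set \<Rightarrow> ('a \<rightharpoonup> 'v) \<Rightarrow> 'k" where
  "cfac T Z u = (\<Prod>v\<in>supp (marg T Z) - {u}. marg T Z v)"

definition kjoin :: "('a \<Rightarrow> 'v set) \<Rightarrow> 'a set \<Rightarrow> (('a \<rightharpoonup> 'v) \<Rightarrow> 'k::comm_semiring_1)
    \<Rightarrow> 'a set \<Rightarrow> (('a \<rightharpoonup> 'v) \<Rightarrow> 'k) \<Rightarrow> ('a \<rightharpoonup> 'v) \<Rightarrow> 'k" where
  "kjoin Dom X R Y S t =
     (if t \<in> Tup Dom (X \<union> Y)
      then R (t |` X) * S (t |` Y) * cfac S (X \<inter> Y) (t |` (X \<inter> Y))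
      else 0)"

definition rproj :: "('a \<rightharpoonup> 'v) set \<Rightarrow> 'a set \<Rightarrow> ('a \<rightharpoonup> 'v) set" where
  "rproj P W = (\<lambda>t. t |` W) ` P"

end

theory Submission imports Defs begin


lemma sum_nz_ex: "sum f {x. Q x} \<noteq> 0 \<Longrightarrow> \<exists>x. Q x"
  by (rule ccontr) simp

lemma pos_add: "positive_semiring TYPE('k::comm_semiring_1) \<Longrightarrow> (a::'k) + b = 0 \<Longrightarrow> a = 0 \<and> b = 0"
  unfolding positive_semiring_def by blast
lemma pos_mult: "positive_semiring TYPE('k::comm_semiring_1) \<Longrightarrow> (a::'k) \<noteq> 0 \<Longrightarrow> b \<noteq> 0 \<Longrightarrow> a * b \<noteq> 0"
  unfolding positive_semiring_def by blast

lemma sum_zero_pos: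
  assumes "positive_semiring TYPE('k::comm_semiring_1)" "finite A" "sum (f::_\<Rightarrow>'k) A = 0" "x \<in> A"
  shows "f x = 0"
  using assms(2,3,4)
proof (induction A rule: finite_induct)
  case empty thus ?case by simp
next
  case (insert y F)
  then have "f y + sum f F = 0" by simp
  with pos_add[OF assms(1)] have "f y = 0" "sum f F = 0" by blast+
  with insert show ?case by auto
qed

lemma prod_nz:
  assumes "positive_semiring TYPE('k::comm_semiring_1)" "finite A" "\<forall>x\<in>A. (f x::'k) \<noteq> 0"
  shows "prod f A \<noteq> 0"
  using assms(2,3)
proof (induction A rule: finite_induct)
  case empty thus ?case by simp
next
  case (insert y F)
  thus ?case using pos_mult[OF assms(1)] by simp
qed

lemma pow_nz:
  assumes "positive_semiring TYPE('k::comm_semiring_1)" "(a::'k) \<noteq> 0"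
  shows "a ^ n \<noteq> 0"
  by (induction n) (auto simp: pos_mult[OF assms(1)] assms(2))

lemma marg_nz:
  assumes "positive_semiring TYPE('k::comm_semiring_1)" "finite (supp (R::_ \<Rightarrow> 'k))"
  shows "marg R Z u \<noteq> 0 \<longleftrightarrow> (\<exists>r\<in>supp R. r |` Z = u)"
proof
  assume "marg R Z u \<noteq> 0"
  then show "\<exists>r\<in>supp R. r |` Z = u"
  proof (rule contrapos_np)
    assume "\<not> (\<exists>r\<in>supp R. r |` Z = u)"
    then have e: "{r\<in>supp R. r |` Z = u} = {}" by blast
    show "marg R Z u = 0" unfolding marg_def e by (rule sum.empty)
  qed
next
  assume "\<exists>r\<in>supp R. r |` Z = u"
  then obtain r where r: "r \<in> supp R" "r |` Z = u" by blast
  show "marg R Z u \<noteq> 0"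
  proof
    assume "marg R Z u = 0"
    then have "R r = 0" unfolding marg_def
      using sum_zero_pos[OF assms(1), of "{r\<in>supp R. r |` Z = u}" R r] assms(2) r by auto
    with r show False by (simp add: supp_def)
  qed
qed

lemma supp_marg:
  assumes "positive_semiring TYPE('k::comm_semiring_1)" "finite (supp (R::_ \<Rightarrow> 'k))"
  shows "supp (marg R Z) = rproj (supp R) Z"
  using marg_nz[OF assms] unfolding supp_def[of "marg R Z"] rproj_def by auto

lemma finite_supp_marg:
  assumes "finite (supp (R::_ \<Rightarrow> 'k::comm_semiring_1))"
  shows "finite (supp (marg R Z))"
proof -
  have "supp (marg R Z) \<subseteq> (\<lambda>t. t |` Z) ` supp R"
    unfolding supp_def marg_def by (auto dest!: sum_nz_ex)
  thus ?thesis using assms finite_subset by blast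
qed

lemma cfac_mult:
  assumes "finite (supp (marg S Z))" "u \<in> supp (marg S Z)"
  shows "cfac S Z u * marg S Z u = prod (marg S Z) (supp (marg S Z))"
  unfolding cfac_def using prod.remove[OF assms, of "marg S Z"] by (simp add: mult.commute)

lemma marg_sum_superset:
  assumes "finite A" "supp H \<subseteq> A"
  shows "marg H Y u = (\<Sum>r\<in>{r\<in>A. r |` Y = u}. H r)"
  unfolding marg_def
  by (rule sum.mono_neutral_left) (use assms in \<open>auto simp: supp_def\<close>)

lemma marg_scale:
  assumes "positive_semiring TYPE('k::comm_semiring_1)" "finite (supp (F::_\<Rightarrow>'k))" "a \<noteq> 0"
  shows "marg (\<lambda>t. a * F t) Z u = a * marg F Z u"
proof -
  have "a * F t \<noteq> 0 \<longleftrightarrow> F t \<noteq> 0" for t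
    by (cases "F t = 0") (simp_all add: pos_mult[OF assms(1) assms(3)])
  then have "supp (\<lambda>t. a * F t) = supp F" unfolding supp_def by simp
  thus ?thesis unfolding marg_def by (simp add: sum_distrib_left)
qed

lemma rr: "Z \<subseteq> X \<Longrightarrow> a |` X |` Z = a |` Z"
  by (simp add: restrict_restrict inf.absorb2)

lemma marg_marg:
  assumes "finite (supp (F::_\<Rightarrow>'k::comm_semiring_1))" "Z \<subseteq> X"
  shows "marg (marg F X) Z u = marg F Z u"
proof -
  have fin: "finite ((\<lambda>t. t |` X) ` supp F)" using assms(1) by simp
  have XZ: "X \<inter> Z = Z" using assms(2) by blast
  have sub: "supp (marg F X) \<subseteq> (\<lambda>t. t |` X) ` supp F"
    unfolding supp_def marg_def by (auto dest!: sum_nz_ex)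
  have "marg (marg F X) Z u = (\<Sum>v\<in>{v\<in>(\<lambda>t. t |` X) ` supp F. v |` Z = u}. marg F X v)"
    by (rule marg_sum_superset[OF fin sub])
  also have "\<dots> = (\<Sum>v\<in>(\<lambda>t. t |` X) ` {t\<in>supp F. t |` Z = u}. (\<Sum>t\<in>{t\<in>supp F. t |` X = v}. F t))"
  proof -
    have "{v\<in>(\<lambda>t. t |` X) ` supp F. v |` Z = u} = (\<lambda>t. t |` X) ` {t\<in>supp F. t |` Z = u}"
      using assms(2) by (auto simp: rr XZ)
    thus ?thesis unfolding marg_def by simp
  qed
  also have "\<dots> = (\<Sum>v\<in>(\<lambda>t. t |` X) ` {t\<in>supp F. t |` Z = u}. (\<Sum>t\<in>{t \<in> {t\<in>supp F. t |` Z = u}. t |` X = v}. F t))"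
    apply (rule sum.cong[OF refl])
    apply (rule sum.cong)
    using assms(2) by (auto simp: rr) (metis rr)
  also have "\<dots> = (\<Sum>t\<in>{t\<in>supp F. t |` Z = u}. F t)"
    by (rule sum.image_gen[symmetric]) (use assms(1) in simp)
  finally show ?thesis unfolding marg_def .
qed



lemma Tup_dom: "t \<in> Tup Dom W \<Longrightarrow> dom t = W"
  unfolding Tup_def by simp

lemma Tup_restr: "t \<in> Tup Dom W \<Longrightarrow> V \<subseteq> W \<Longrightarrow> t |` V \<in> Tup Dom V"
  unfolding Tup_def by auto

lemma eq_restr:
  assumes "dom t1 = X \<union> Y" "dom t2 = X \<union> Y" "t1 |` X = t2 |` X" "t1 |` Y = t2 |` Y"
  shows "t1 = t2"
proof
  fix x
  show "t1 x = t2 x"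
  proof (cases "x \<in> X")
    case True thus ?thesis using fun_cong[OF assms(3), of x] by simp
  next
    case f: False
    show ?thesis
    proof (cases "x \<in> Y")
      case True thus ?thesis using fun_cong[OF assms(4), of x] by simp
    next
      case False
      with f assms(1,2) have "x \<notin> dom t1" "x \<notin> dom t2" by auto
      thus ?thesis by (simp add: domIff)
    qed
  qed
qed

lemma decomp: "dom t \<subseteq> X \<union> Y \<Longrightarrow> t = (t |` X) ++ (t |` Y)"
  by (rule ext) (auto simp: map_add_def restrict_map_def split: option.split)

lemma glue:
  assumes "r \<in> Tup Dom X" "s \<in> Tup Dom Y" "s |` (X \<inter> Y) = r |` (X \<inter> Y)"
  shows "r ++ s \<in> Tup Dom (X \<union> Y)" "(r ++ s) |` X = r" "(r ++ s) |` Y = s"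
proof -
  have dr: "dom r = X" and ds: "dom s = Y" using assms Tup_dom by blast+
  show "(r ++ s) |` Y = s"
    by (rule ext) (use ds in \<open>auto simp: map_add_def restrict_map_def split: option.split\<close>)
  show "(r ++ s) |` X = r"
  proof (rule ext)
    fix x
    show "((r ++ s) |` X) x = r x"
    proof (cases "x \<in> X")
      case True
      show ?thesis
      proof (cases "x \<in> Y")
        case True
        with \<open>x\<in>X\<close> have "s x = r x" using fun_cong[OF assms(3), of x] by simp
        thus ?thesis using \<open>x\<in>X\<close> by (auto simp: map_add_def split: option.split)
      next
        case False
        then have "s x = None" using ds by auto
        thus ?thesis using \<open>x\<in>X\<close> by (auto simp: map_add_def)
      qed
    next
      case False thus ?thesis using dr by auto
    qed
  qed
  show "r ++ s \<in> Tup Dom (X \<union> Y)"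
    unfolding Tup_def
  proof (intro CollectI conjI ballI)
    show "dom (r ++ s) = X \<union> Y" using dr ds by auto
    fix A assume A: "A \<in> X \<union> Y"
    show "\<exists>v\<in>Dom A. (r ++ s) A = Some v"
    proof (cases "A \<in> Y")
      case True
      then obtain v where "v \<in> Dom A" "s A = Some v" using assms(2) unfolding Tup_def by blast
      thus ?thesis by auto
    next
      case False
      then have "s A = None" using ds by auto
      moreover obtain v where "v \<in> Dom A" "r A = Some v" using assms(1) A False unfolding Tup_def by blast
      ultimately show ?thesis by (auto simp: map_add_def)
    qed
  qed
qed

definition gj :: "('a \<Rightarrow> 'v set) \<Rightarrow> 'a set \<Rightarrow> (('a \<rightharpoonup> 'v) \<Rightarrow> 'k::comm_semiring_1)
    \<Rightarrow> 'a set \<Rightarrow> (('a \<rightharpoonup> 'v) \<Rightarrow> 'k) \<Rightarrow> (('a \<rightharpoonup> 'v) \<Rightarrow> 'k) \<Rightarrow> ('a \<rightharpoonup> 'v) \<Rightarrow> 'k" where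
  "gj Dom X R Y S g t =
     (if t \<in> Tup Dom (X \<union> Y) then R (t |` X) * S (t |` Y) * g (t |` (X \<inter> Y)) else 0)"

lemma gj_supp: "supp (gj Dom X R Y S g) \<subseteq> Tup Dom (X \<union> Y)"
  unfolding supp_def gj_def by auto

lemma gj_finite:
  assumes "finite (supp R)" "finite (supp S)"
  shows "finite (supp (gj Dom X R Y S g))"
proof -
  have "supp (gj Dom X R Y S g) \<subseteq> (\<lambda>(r,s). r ++ s) ` (supp R \<times> supp S)"
  proof
    fix t assume t: "t \<in> supp (gj Dom X R Y S g)"
    then have "t \<in> Tup Dom (X \<union> Y)" "R (t |` X) \<noteq> 0" "S (t |` Y) \<noteq> 0"
      unfolding supp_def gj_def by (auto split: if_splits)
    moreover have "t = (t |` X) ++ (t |` Y)"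
      by (rule decomp) (use \<open>t \<in> Tup Dom (X \<union> Y)\<close> Tup_dom in blast)
    ultimately show "t \<in> (\<lambda>(r,s). r ++ s) ` (supp R \<times> supp S)"
      unfolding supp_def by (metis (mono_tags, lifting) SigmaI case_prod_conv image_eqI mem_Collect_eq)
  qed
  thus ?thesis using assms finite_subset by blast
qed

lemma marg_sum_superset2:
  assumes "finite A" "\<forall>r\<in>supp H. r |` Y = u \<longrightarrow> r \<in> A" "\<forall>r\<in>A. r |` Y = u"
  shows "marg H Y u = sum H A"
  unfolding marg_def
  by (rule sum.mono_neutral_left) (use assms in \<open>auto simp: supp_def\<close>)

lemma gj_marg:
  assumes "krel Dom X R" "krel Dom Y S"
  shows "marg (gj Dom X R Y S g) X r = R r * g (r |` (X \<inter> Y)) * marg S (X \<inter> Y) (r |` (X \<inter> Y))"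
proof -
  have fR: "finite (supp R)" and sR: "supp R \<subseteq> Tup Dom X"
   and fS: "finite (supp S)" and sS: "supp S \<subseteq> Tup Dom Y"
    using assms unfolding krel_def by auto
  let ?Z = "X \<inter> Y"
  let ?F = "gj Dom X R Y S g"
  let ?A = "{t. t \<in> Tup Dom (X \<union> Y) \<and> t |` X = r \<and> t |` Y \<in> supp S}"
  let ?B = "{s\<in>supp S. s |` ?Z = r |` ?Z}"
  show ?thesis
  proof (cases "r \<in> Tup Dom X")
    case False
    then have "R r = 0" using sR unfolding supp_def by blast
    moreover have "marg ?F X r = 0"
    proof -
      have "{t\<in>supp ?F. t |` X = r} = {}"
        using gj_supp[of Dom X R Y S g] Tup_restr[of _ Dom "X \<union> Y" X] False by blast
      thus ?thesis unfolding marg_def by (simp only: sum.empty)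
    qed
    ultimately show ?thesis by simp
  next
    case True
  have inj: "inj_on (\<lambda>t. t |` Y) ?A"
  proof (rule inj_onI)
    fix x y assume x: "x \<in> ?A" and y: "y \<in> ?A" and e: "x |` Y = y |` Y"
    show "x = y"
    proof (rule eq_restr[of x X Y y])
      show "dom x = X \<union> Y" using x Tup_dom by blast
      show "dom y = X \<union> Y" using y Tup_dom by blast
      show "x |` X = y |` X" using x y by simp
    qed (rule e)
  qed
  have finA: "finite ?A"
    by (rule finite_imageD[OF _ inj]) (rule finite_subset[OF _ fS], auto)
  have "marg ?F X r = (\<Sum>t\<in>?A. ?F t)"
  proof (rule marg_sum_superset2[OF finA])
    show "\<forall>t\<in>supp ?F. t |` X = r \<longrightarrow> t \<in> ?A"
      unfolding supp_def gj_def by (auto split: if_splits)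
  qed auto
  also have "\<dots> = (\<Sum>t\<in>?A. R r * g (r |` ?Z) * S (t |` Y))"
  proof (rule sum.cong)
    fix t assume "t \<in> ?A"
    then have "t |` X = r" by simp
    then have "t |` ?Z = r |` ?Z" using rr[OF Int_lower1[of X Y], of t] by simp
    with \<open>t \<in> ?A\<close> show "?F t = R r * g (r |` ?Z) * S (t |` Y)"
      unfolding gj_def by (simp add: ac_simps)
  qed auto
  also have "\<dots> = R r * g (r |` ?Z) * (\<Sum>t\<in>?A. S (t |` Y))"
    by (simp add: sum_distrib_left)
  also have "(\<Sum>t\<in>?A. S (t |` Y)) = marg S ?Z (r |` ?Z)"
  proof -
    have "(\<Sum>t\<in>?A. S (t |` Y)) = sum S ((\<lambda>t. t |` Y) ` ?A)"
      by (simp only: sum.reindex[OF inj] comp_def)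
    also have "(\<lambda>t. t |` Y) ` ?A = ?B"
    proof
      show "(\<lambda>t. t |` Y) ` ?A \<subseteq> ?B"
      proof
        fix s assume "s \<in> (\<lambda>t. t |` Y) ` ?A"
        then obtain t where t: "t \<in> ?A" "s = t |` Y" by blast
        have tx: "t |` X = r" using t(1) by simp
        have "s |` ?Z = t |` ?Z" by (simp only: t(2) rr[OF Int_lower2])
        also have "\<dots> = r |` ?Z" by (simp only: tx[symmetric] rr[OF Int_lower1])
        finally show "s \<in> ?B" using t by simp
      qed
      show "?B \<subseteq> (\<lambda>t. t |` Y) ` ?A"
      proof
        fix s assume s: "s \<in> ?B"
        then have sT: "s \<in> Tup Dom Y" using sS by blast
        have g: "r ++ s \<in> Tup Dom (X \<union> Y)" "(r ++ s) |` X = r" "(r ++ s) |` Y = s"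
          using glue[OF True sT] s by auto
        thus "s \<in> (\<lambda>t. t |` Y) ` ?A" using s by (auto intro!: image_eqI[of _ _ "r ++ s"])
      qed
    qed
    finally show ?thesis unfolding marg_def by simp
  qed
  finally show ?thesis .
  qed
qed



lemma marg_fac:
  assumes "finite (supp R)"
  shows "marg (\<lambda>r. (R r::'k::comm_semiring_1) * h (r |` Z)) Z u = marg R Z u * h u"
proof -
  have "marg (\<lambda>r. R r * h (r |` Z)) Z u = (\<Sum>r\<in>{r\<in>supp R. r |` Z = u}. R r * h (r |` Z))"
    by (rule marg_sum_superset[OF assms]) (auto simp: supp_def)
  also have "\<dots> = (\<Sum>r\<in>{r\<in>supp R. r |` Z = u}. R r * h u)" by (rule sum.cong) auto
  also have "\<dots> = marg R Z u * h u" unfolding marg_def by (simp add: sum_distrib_right)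
  finally show ?thesis .
qed

lemma kequivI: "(a::'k::comm_semiring_1) \<noteq> 0 \<Longrightarrow> b \<noteq> 0 \<Longrightarrow> (\<And>t. a * R t = b * S t) \<Longrightarrow> kequiv R S"
  unfolding kequiv_def by blast

lemma kequivD: "kequiv R S \<Longrightarrow> \<exists>a b. (a::'k::comm_semiring_1) \<noteq> 0 \<and> b \<noteq> 0 \<and> (\<forall>t. a * R t = b * S t)"
  unfolding kequiv_def by (metis)

lemma kequivE:
  assumes "kequiv R S" "\<And>a b. (a::'k::comm_semiring_1) \<noteq> 0 \<Longrightarrow> b \<noteq> 0 \<Longrightarrow> (\<And>t. a * R t = b * S t) \<Longrightarrow> P"
  shows P
proof -
  from assms(1) obtain a b where ab: "a \<noteq> 0" "b \<noteq> 0" "(\<lambda>t. a * R t) = (\<lambda>t. b * S t)"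
    unfolding kequiv_def by blast
  have "\<And>t. a * R t = b * S t" using fun_cong[OF ab(3)] by simp
  with ab(1,2) show P by (rule assms(2))
qed

lemma cfac_scale:
  assumes "finite W" "\<And>v. v \<in> W \<Longrightarrow> a * f v = b * (g v::'k::comm_semiring_1)"
  shows "a ^ card W * prod f W = b ^ card W * prod g W"
proof -
  have "a ^ card W * prod f W = prod (\<lambda>v. a * f v) W" by (simp add: prod.distrib)
  also have "\<dots> = prod (\<lambda>v. b * g v) W" using assms(2) by (rule prod.cong[OF refl])
  also have "\<dots> = b ^ card W * prod g W" by (simp add: prod.distrib)
  finally show ?thesis .
qed

theorem lemma7:
  fixes Dom :: "'a \<Rightarrow> 'v set"
    and X Y :: "'a set"
    and R S :: "('a \<rightharpoonup> 'v) \<Rightarrow> 'k::comm_semiring_1"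
  assumes "positive_semiring TYPE('k)"
    and "finite X" and "finite Y"
    and "krel Dom X R" and "krel Dom Y S"
  shows "(kconsistent Dom X R Y S
            \<longleftrightarrow> kequiv (marg R (X \<inter> Y)) (marg S (X \<inter> Y)))
       \<and> (kconsistent Dom X R Y S
            \<longleftrightarrow> (rproj (supp R) (X \<inter> Y) = rproj (supp S) (X \<inter> Y)
                 \<and> kequiv (kjoin Dom X R Y S) (kjoin Dom Y S X R)))
       \<and> (kconsistent Dom X R Y S
            \<longleftrightarrow> (kequiv R (marg (kjoin Dom X R Y S) X)
                 \<and> kequiv S (marg (kjoin Dom X R Y S) Y)))"
proof -
  note pos = assms(1)
  have fR: "finite (supp R)" and sR: "supp R \<subseteq> Tup Dom X"
   and fS: "finite (supp S)" and sS: "supp S \<subseteq> Tup Dom Y"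
    using assms(4,5) unfolding krel_def by auto
  define Z where "Z = X \<inter> Y"
  have YX: "Y \<inter> X = Z" "Y \<union> X = X \<union> Y" unfolding Z_def by auto
  define mR where "mR = marg R Z"
  define mS where "mS = marg S Z"
  define WR where "WR = supp mR"
  define WS where "WS = supp mS"
  define PR where "PR = prod mR WR"
  define PS where "PS = prod mS WS"
  have fWR: "finite WR" unfolding WR_def mR_def using finite_supp_marg[OF fR] .
  have fWS: "finite WS" unfolding WS_def mS_def using finite_supp_marg[OF fS] .
  have PRnz: "PR \<noteq> 0" unfolding PR_def by (rule prod_nz[OF pos fWR]) (simp add: WR_def supp_def)
  have PSnz: "PS \<noteq> 0" unfolding PS_def by (rule prod_nz[OF pos fWS]) (simp add: WS_def supp_def)
  have KR: "r |` Z \<in> WR" if "R r \<noteq> 0" for r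
    using marg_nz[OF pos fR] that unfolding WR_def mR_def supp_def by auto
  have KS: "s |` Z \<in> WS" if "S s \<noteq> 0" for s
    using marg_nz[OF pos fS] that unfolding WS_def mS_def supp_def by auto
  have cR: "cfac R Z u * mR u = PR" if "u \<in> WR" for u
    using cfac_mult[of R Z u] fWR that unfolding PR_def WR_def mR_def by simp
  have cS: "cfac S Z u * mS u = PS" if "u \<in> WS" for u
    using cfac_mult[of S Z u] fWS that unfolding PS_def WS_def mS_def by simp
  have J1: "kjoin Dom X R Y S = gj Dom X R Y S (cfac S Z)"
    unfolding Z_def by (rule ext) (simp add: kjoin_def gj_def)
  have J2: "kjoin Dom X R Y S = gj Dom Y S X R (cfac S Z)"
    by (rule ext) (simp add: kjoin_def gj_def YX Z_def ac_simps)
  have J3: "kjoin Dom Y S X R = gj Dom X R Y S (cfac R Z)"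
    by (rule ext) (simp add: kjoin_def gj_def YX Z_def ac_simps)
  have M1: "marg (kjoin Dom X R Y S) X r = R r * cfac S Z (r |` Z) * mS (r |` Z)" for r
    unfolding J1 mS_def Z_def by (rule gj_marg[OF assms(4,5)])
  have M2: "marg (kjoin Dom X R Y S) Y s = S s * cfac S Z (s |` Z) * mR (s |` Z)" for s
    unfolding J2 mR_def using gj_marg[OF assms(5,4), of "cfac S Z" s] by (simp add: YX)
  have M3: "marg (kjoin Dom Y S X R) X r = R r * cfac R Z (r |` Z) * mS (r |` Z)" for r
    unfolding J3 mS_def Z_def using gj_marg[OF assms(4,5)] by (simp add: Z_def)
  have krelJ: "krel Dom (X \<union> Y) (kjoin Dom X R Y S)"
    unfolding krel_def J1 using gj_supp gj_finite[OF fR fS] by blast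

  have WRS: "WR = WS" if "kequiv mR mS"
  proof -
    from that obtain a b where ab: "a \<noteq> 0" "b \<noteq> 0" "\<And>t. a * mR t = b * mS t" by (blast dest: kequivD)
    have "mR u \<noteq> 0 \<longleftrightarrow> mS u \<noteq> 0" for u
    proof
      assume "mR u \<noteq> 0"
      then have "a * mR u \<noteq> 0" by (rule pos_mult[OF pos ab(1)])
      then have "b * mS u \<noteq> 0" by (metis ab(3))
      thus "mS u \<noteq> 0" by auto
    next
      assume "mS u \<noteq> 0"
      then have "b * mS u \<noteq> 0" by (rule pos_mult[OF pos ab(2)])
      then have "a * mR u \<noteq> 0" by (metis ab(3))
      thus "mR u \<noteq> 0" by auto
    qed
    thus ?thesis unfolding WR_def WS_def supp_def by auto
  qed

  have ab: "kequiv mR mS" if "kconsistent Dom X R Y S"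
  proof -
    from that obtain T where T: "krel Dom (X \<union> Y) T" "kequiv R (marg T X)" "kequiv S (marg T Y)"
      unfolding kconsistent_def by blast
    have fT: "finite (supp T)" using T(1) unfolding krel_def by auto
    obtain a b where ab: "a \<noteq> 0" "b \<noteq> 0" "\<And>t. a * R t = b * marg T X t" using T(2) by (blast dest: kequivD)
    obtain c d where cd: "c \<noteq> 0" "d \<noteq> 0" "\<And>t. c * S t = d * marg T Y t" using T(3) by (blast dest: kequivD)
    have e1: "a * mR u = b * marg T Z u" for u
    proof -
      have "a * mR u = marg (\<lambda>t. a * R t) Z u" unfolding mR_def using marg_scale[OF pos fR ab(1)] by simp
      also have "(\<lambda>t. a * R t) = (\<lambda>t. b * marg T X t)" using ab(3) by auto
      also have "marg \<dots> Z u = b * marg (marg T X) Z u" using marg_scale[OF pos finite_supp_marg[OF fT] ab(2)] by simp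
      also have "\<dots> = b * marg T Z u" using marg_marg[OF fT, of Z X] by (simp add: Z_def)
      finally show ?thesis .
    qed
    have e2: "c * mS u = d * marg T Z u" for u
    proof -
      have "c * mS u = marg (\<lambda>t. c * S t) Z u" unfolding mS_def using marg_scale[OF pos fS cd(1)] by simp
      also have "(\<lambda>t. c * S t) = (\<lambda>t. d * marg T Y t)" using cd(3) by auto
      also have "marg \<dots> Z u = d * marg (marg T Y) Z u" using marg_scale[OF pos finite_supp_marg[OF fT] cd(2)] by simp
      also have "\<dots> = d * marg T Z u" using marg_marg[OF fT, of Z Y] by (simp add: Z_def)
      finally show ?thesis .
    qed
    show ?thesis
    proof (rule kequivI)
      show "d * a \<noteq> 0" "b * c \<noteq> 0" using pos_mult[OF pos] ab cd by auto
      fix u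
      have "d * a * mR u = d * (b * marg T Z u)" using e1 by (simp add: mult.assoc)
      also have "\<dots> = b * (d * marg T Z u)" by (simp add: ac_simps)
      also have "\<dots> = b * c * mS u" using e2 by (simp add: mult.assoc)
      finally show "d * a * mR u = b * c * mS u" .
    qed
  qed

  have bd: "kequiv R (marg (kjoin Dom X R Y S) X) \<and> kequiv S (marg (kjoin Dom X R Y S) Y)"
    if hk: "kequiv mR mS"
  proof
    have W: "WR = WS" using WRS[OF that] .
    obtain a b where ab: "a \<noteq> 0" "b \<noteq> 0" "\<And>t. a * mR t = b * mS t" using hk by (blast dest: kequivD)
    show "kequiv R (marg (kjoin Dom X R Y S) X)"
    proof (rule kequivI[OF PSnz one_neq_zero])
      fix r
      show "PS * R r = 1 * marg (kjoin Dom X R Y S) X r"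
      proof (cases "R r = 0")
        case True thus ?thesis by (simp add: M1)
      next
        case False
        then have "r |` Z \<in> WS" using KR W by auto
        thus ?thesis using cS[of "r |` Z"] by (simp add: M1 ac_simps)
      qed
    qed
    show "kequiv S (marg (kjoin Dom X R Y S) Y)"
    proof (rule kequivI[of "b * PS" a])
      show "b * PS \<noteq> 0" using pos_mult[OF pos ab(2) PSnz] .
      show "a \<noteq> 0" by (rule ab(1))
      fix s
      show "b * PS * S s = a * marg (kjoin Dom X R Y S) Y s"
      proof (cases "S s = 0")
        case True thus ?thesis by (simp add: M2)
      next
        case False
        then have u: "s |` Z \<in> WS" using KS by auto
        have "a * marg (kjoin Dom X R Y S) Y s = S s * cfac S Z (s |` Z) * (a * mR (s |` Z))"
          by (simp add: M2 ac_simps)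
        also have "\<dots> = S s * b * (cfac S Z (s |` Z) * mS (s |` Z))" by (simp add: ab(3) ac_simps)
        also have "\<dots> = b * PS * S s" using cS[OF u] by (simp add: ac_simps)
        finally show ?thesis by simp
      qed
    qed
  qed

  have da: "kconsistent Dom X R Y S"
    if "kequiv R (marg (kjoin Dom X R Y S) X) \<and> kequiv S (marg (kjoin Dom X R Y S) Y)"
    unfolding kconsistent_def using krelJ that by blast

  have bc: "rproj (supp R) Z = rproj (supp S) Z \<and> kequiv (kjoin Dom X R Y S) (kjoin Dom Y S X R)"
    if hk: "kequiv mR mS"
  proof
    have W: "WR = WS" using WRS[OF that] .
    show "rproj (supp R) Z = rproj (supp S) Z"
      using W supp_marg[OF pos fR, of Z] supp_marg[OF pos fS, of Z] unfolding WR_def WS_def mR_def mS_def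
      by simp
    obtain a b where ab: "a \<noteq> 0" "b \<noteq> 0" "\<And>t. a * mR t = b * mS t" using hk by (blast dest: kequivD)
    define n where "n = card WR"
    have cc: "a * b ^ n * cfac S Z u = a ^ n * b * cfac R Z u" if u: "u \<in> WR" for u
    proof -
      define m where "m = card (WR - {u})"
      have n: "n = Suc m" unfolding n_def m_def using card_Suc_Diff1[OF fWR u] by simp
      have "a ^ m * cfac R Z u = b ^ m * cfac S Z u"
      proof -
        have cR': "cfac R Z u = prod mR (WR - {u})" unfolding cfac_def WR_def mR_def ..
        have cS': "cfac S Z u = prod mS (WR - {u})" unfolding cfac_def W WS_def mS_def ..
        show ?thesis unfolding cR' cS' m_def by (rule cfac_scale) (use fWR ab(3) in auto)
      qed
      then have "a * b * (a ^ m * cfac R Z u) = a * b * (b ^ m * cfac S Z u)" by simp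
      thus ?thesis by (simp add: n ac_simps)
    qed
    show "kequiv (kjoin Dom X R Y S) (kjoin Dom Y S X R)"
    proof (rule kequivI[of "a * b ^ n" "a ^ n * b"])
      show "a * b ^ n \<noteq> 0" using pos_mult[OF pos ab(1) pow_nz[OF pos ab(2)]] .
      show "a ^ n * b \<noteq> 0" using pos_mult[OF pos pow_nz[OF pos ab(1)] ab(2)] .
      fix t
      show "a * b ^ n * kjoin Dom X R Y S t = a ^ n * b * kjoin Dom Y S X R t"
      proof (cases "R (t |` X) = 0 \<or> t \<notin> Tup Dom (X \<union> Y)")
        case True thus ?thesis by (auto simp: J1 J3 gj_def)
      next
        case False
        then have "t |` X |` Z \<in> WR" using KR by blast
        then have tz: "t |` Z \<in> WR" by (simp add: rr Z_def)
        have e1: "kjoin Dom X R Y S t = R (t |` X) * S (t |` Y) * cfac S Z (t |` Z)"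
          using False by (simp add: J1 gj_def Z_def)
        have e3: "kjoin Dom Y S X R t = R (t |` X) * S (t |` Y) * cfac R Z (t |` Z)"
          using False by (simp add: J3 gj_def Z_def)
        have "a * b ^ n * kjoin Dom X R Y S t = R (t |` X) * S (t |` Y) * (a * b ^ n * cfac S Z (t |` Z))"
          unfolding e1 by (simp only: ac_simps)
        also have "\<dots> = R (t |` X) * S (t |` Y) * (a ^ n * b * cfac R Z (t |` Z))"
          by (simp only: cc[OF tz])
        also have "\<dots> = a ^ n * b * kjoin Dom Y S X R t"
          unfolding e3 by (simp only: ac_simps)
        finally show ?thesis .
      qed
    qed
  qed

  have cb: "kequiv mR mS"
    if "rproj (supp R) Z = rproj (supp S) Z \<and> kequiv (kjoin Dom X R Y S) (kjoin Dom Y S X R)"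
  proof -
    have W: "WR = WS"
      using that supp_marg[OF pos fR, of Z] supp_marg[OF pos fS, of Z] unfolding WR_def WS_def mR_def mS_def
      by simp
    have kj: "kequiv (kjoin Dom X R Y S) (kjoin Dom Y S X R)" using that by blast
    obtain \<alpha> \<beta> where ab: "\<alpha> \<noteq> 0" "\<beta> \<noteq> 0" "\<And>t. \<alpha> * kjoin Dom X R Y S t = \<beta> * kjoin Dom Y S X R t"
      using kj by (blast dest: kequivD)
    have fJ1: "finite (supp (kjoin Dom X R Y S))" using krelJ unfolding krel_def by auto
    have fJ3: "finite (supp (kjoin Dom Y S X R))" unfolding J3 by (rule gj_finite[OF fR fS])
    have E: "\<alpha> * (mR u * (cfac S Z u * mS u)) = \<beta> * (mR u * (cfac R Z u * mS u))" for u
    proof -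
      have "marg (\<lambda>t. \<alpha> * kjoin Dom X R Y S t) X = marg (\<lambda>t. \<beta> * kjoin Dom Y S X R t) X"
        using ab(3) by simp
      note h = this
      have "(\<lambda>r. \<alpha> * marg (kjoin Dom X R Y S) X r) = (\<lambda>r. \<beta> * marg (kjoin Dom Y S X R) X r)"
      proof (rule ext)
        fix r
        show "\<alpha> * marg (kjoin Dom X R Y S) X r = \<beta> * marg (kjoin Dom Y S X R) X r"
          using fun_cong[OF h, of r] by (simp only: marg_scale[OF pos fJ1 ab(1)] marg_scale[OF pos fJ3 ab(2)])
      qed
      then have "(\<lambda>r. \<alpha> * (R r * (cfac S Z (r |` Z) * mS (r |` Z)))) =
                 (\<lambda>r. \<beta> * (R r * (cfac R Z (r |` Z) * mS (r |` Z))))"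
        by (simp add: M1 M3 mult.assoc)
      then have "marg (\<lambda>r. \<alpha> * (R r * (cfac S Z (r |` Z) * mS (r |` Z)))) Z u =
                 marg (\<lambda>r. \<beta> * (R r * (cfac R Z (r |` Z) * mS (r |` Z)))) Z u" by simp
      moreover have f1: "finite (supp (\<lambda>r. R r * (cfac S Z (r |` Z) * mS (r |` Z))))"
        by (rule finite_subset[OF _ fR]) (auto simp: supp_def)
      moreover have f2: "finite (supp (\<lambda>r. R r * (cfac R Z (r |` Z) * mS (r |` Z))))"
        by (rule finite_subset[OF _ fR]) (auto simp: supp_def)
      ultimately have "\<alpha> * marg (\<lambda>r. R r * (cfac S Z (r |` Z) * mS (r |` Z))) Z u =
                 \<beta> * marg (\<lambda>r. R r * (cfac R Z (r |` Z) * mS (r |` Z))) Z u"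
        by (simp only: marg_scale[OF pos f1 ab(1)] marg_scale[OF pos f2 ab(2)])
      moreover have "marg (\<lambda>r. R r * (cfac S Z (r |` Z) * mS (r |` Z))) Z u = mR u * (cfac S Z u * mS u)"
        using marg_fac[OF fR, of "\<lambda>v. cfac S Z v * mS v" Z u] unfolding mR_def by simp
      moreover have "marg (\<lambda>r. R r * (cfac R Z (r |` Z) * mS (r |` Z))) Z u = mR u * (cfac R Z u * mS u)"
        using marg_fac[OF fR, of "\<lambda>v. cfac R Z v * mS v" Z u] unfolding mR_def by simp
      ultimately show ?thesis by simp
    qed
    show ?thesis
    proof (rule kequivI[of "\<alpha> * PS" "\<beta> * PR"])
      show "\<alpha> * PS \<noteq> 0" using pos_mult[OF pos ab(1) PSnz] .
      show "\<beta> * PR \<noteq> 0" using pos_mult[OF pos ab(2) PRnz] .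
      fix u
      show "\<alpha> * PS * mR u = \<beta> * PR * mS u"
      proof (cases "u \<in> WR")
        case False
        then have "mR u = 0" "mS u = 0" using W unfolding WR_def WS_def supp_def by auto
        thus ?thesis by simp
      next
        case True
        have "\<alpha> * PS * mR u = \<alpha> * (mR u * (cfac S Z u * mS u))" using cS[of u] True W by (simp add: ac_simps)
        also have "\<dots> = \<beta> * (mR u * (cfac R Z u * mS u))" by (rule E)
        also have "\<dots> = \<beta> * (cfac R Z u * mR u) * mS u" by (simp only: ac_simps)
        also have "\<dots> = \<beta> * PR * mS u" by (simp only: cR[OF True])
        finally show ?thesis .
      qed
    qed
  qed

  show ?thesis
    using ab bd da bc cb unfolding mR_def mS_def Z_def by blast
qed

end
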